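(* Let $I=[0,1]$ and $f_{1,\infty}$ a sequence of continuous self-maps of $I$. Then $(I,f_{1,\infty})$ is weakly mixing of order $3$ if and only if $(\mathcal{M}(I),\widetilde{f}_{1,\infty})$ is weakly mixing of order $3$.
   Context: For $f_{1,\infty}=\{f_n\}_{n\ge1}$ write $f_1^n=f_n\circ\cdots\circ f_1$. $\mathcal{M}(I)$ is the space of Borel probability measures on $I$ with the weak$^*$ topology, and $\widetilde{f}_1^n(\mu)(A)=\mu((f_1^n)^{-1}(A))$ for Borel $A$. A non-autonomous system $(Y,g_{1,\infty})$ is weakly mixing of order $m$ ($m\ge2$) if for any non-empty open sets $U_1,\dots,U_m,V_1,\dots,V_m\subseteq Y$ there is $n\in\mathbb{N}$ with $g_1^n(U_i)\cap V_i\neq\emptyset$ for all $1\le i\le m$. *)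

theory Defs
  imports "HOL-Analysis.Analysis" "HOL-Probability.Probability"
begin

text \<open>Composition of a non-autonomous system: comp_seq g n = g n o ... o g 1
  (and comp_seq g 0 = id). Only g 1, g 2, ... are used.\<close>
fun comp_seq :: "(nat \<Rightarrow> 'a \<Rightarrow> 'a) \<Rightarrow> nat \<Rightarrow> 'a \<Rightarrow> 'a" where
  "comp_seq g 0 = id"
| "comp_seq g (Suc n) = g (Suc n) \<circ> comp_seq g n"

text \<open>Weak mixing of order m of the non-autonomous system (Y, g_{1,infinity}),
  Y given as a topological space X. Indices 1..m are rendered as 0..<m.\<close>
definition weakly_mixing_order ::
  "nat \<Rightarrow> 'a topology \<Rightarrow> (nat \<Rightarrow> 'a \<Rightarrow> 'a) \<Rightarrow> bool" where
  "weakly_mixing_order m X g \<longleftrightarrow>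
     (\<forall>U V :: nat \<Rightarrow> 'a set.
        (\<forall>i<m. openin X (U i) \<and> U i \<noteq> {} \<and> openin X (V i) \<and> V i \<noteq> {}) \<longrightarrow>
        (\<exists>n\<ge>1. \<forall>i<m. comp_seq g n ` (U i) \<inter> V i \<noteq> {}))"

definition borel_I :: "real measure" where
  "borel_I = restrict_space borel {0..1}"

definition prob_measures_I :: "real measure set" where
  "prob_measures_I = {\<mu>. prob_space \<mu> \<and> sets \<mu> = sets borel_I}"

definition weak_star_topology_I :: "real measure topology" where
  "weak_star_topology_I = topology_generated_by
     {{\<mu> \<in> prob_measures_I. (\<integral>x. g x \<partial>\<mu>) \<in> W} | (g :: real \<Rightarrow> real) (W :: real set).
        continuous_on {0..1} g \<and> open W}"

definition pushforward_I :: "(real \<Rightarrow> real) \<Rightarrow> real measure \<Rightarrow> real measure" where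
  "pushforward_I h \<mu> = distr \<mu> borel_I h"

end

theory Submission
  imports Defs
begin


definition BB :: "real \<Rightarrow> real \<Rightarrow> real set" where
  "BB c r = {x. 0 \<le> x \<and> x \<le> 1 \<and> \<bar>x - c\<bar> < r}"

lemma BB_sub: "BB c r \<subseteq> {0..1}" by (auto simp: BB_def)

lemma BB_open: "openin (subtopology euclideanreal {0..1}) (BB c r)"
proof -
  have "BB c r = {0..1} \<inter> ball c r" by (auto simp: BB_def dist_real_def)
  then show ?thesis by (simp add: openin_subtopology_Int2)
qed

lemma BB_center: "c \<in> {0..1} \<Longrightarrow> r > 0 \<Longrightarrow> c \<in> BB c r" by (auto simp: BB_def)

lemma BB_connected: "connected (BB c r)"
proof -
  have "BB c r = {0..1} \<inter> ball c r" by (auto simp: BB_def dist_real_def)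
  then show ?thesis by (simp add: convex_connected convex_Int)
qed

locale sys =
  fixes f :: "nat \<Rightarrow> real \<Rightarrow> real"
  assumes cont: "\<And>n. n \<ge> 1 \<Longrightarrow> continuous_on {0..1} (f n)"
    and self: "\<And>n. n \<ge> 1 \<Longrightarrow> f n ` {0..1} \<subseteq> {0..1}"
begin

lemma F_props: "continuous_on {0..1} (comp_seq f n) \<and> comp_seq f n ` {0..1} \<subseteq> {0..1}"
proof (induction n)
  case 0 show ?case by (simp add: continuous_on_id)
next
  case (Suc n)
  have c: "continuous_on {0..1} (f (Suc n))" and s: "f (Suc n) ` {0..1} \<subseteq> {0..1}"
    using cont[of "Suc n"] self[of "Suc n"] by auto
  have "continuous_on {0..1} (f (Suc n) \<circ> comp_seq f n)"
    using Suc c by (intro continuous_on_compose) (auto intro: continuous_on_subset)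
  moreover have "(f (Suc n) \<circ> comp_seq f n) ` {0..1} \<subseteq> {0..1}"
    using Suc s by (auto simp: image_comp[symmetric] image_subset_iff)
  ultimately show ?case by simp
qed

lemma F_cont: "continuous_on {0..1} (comp_seq f n)" using F_props by blast
lemma F_self: "x \<in> {0..1} \<Longrightarrow> comp_seq f n x \<in> {0..1}" using F_props by blast

lemma F_factor: "n \<le> m \<Longrightarrow> \<exists>H. comp_seq f m = H \<circ> comp_seq f n"
proof (induction m rule: dec_induct)
  case base then show ?case by (auto intro: exI[of _ id])
next
  case (step m)
  then obtain H where "comp_seq f m = H \<circ> comp_seq f n" by blast
  then show ?case by (auto intro: exI[of _ "f (Suc m) \<circ> H"])
qed

lemma dominate: "n \<le> m \<Longrightarrow> comp_seq f n ` K \<subseteq> comp_seq f n ` J \<Longrightarrow> comp_seq f m ` K \<subseteq> comp_seq f m ` J"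
  using F_factor[of n m] by (auto simp: image_comp[symmetric] image_mono)

lemma F_cont_at:
  assumes "p \<in> {0..1}" "e > 0"
  shows "\<exists>d>0. \<forall>y\<in>{0..1}. \<bar>y - p\<bar> < d \<longrightarrow> \<bar>comp_seq f n y - comp_seq f n p\<bar> < e"
  using F_cont[of n] assms unfolding continuous_on_iff dist_real_def by blast

lemma shrink:
  assumes "c \<in> {0..1}" "r > 0" "d \<in> {0..1}" "s > 0"
  shows "\<exists>c' r' d' s'. c' \<in> {0..1} \<and> r' > 0 \<and> d' \<in> {0..1} \<and> s' > 0 \<and>
     BB c' r' \<subseteq> BB c r \<and> BB d' s' \<subseteq> BB d s \<and>
     (\<forall>n<n0. comp_seq f n ` BB c' r' \<inter> BB d' s' = {})"
proof (induction n0)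
  case 0 then show ?case using assms by blast
next
  case (Suc n0)
  then obtain c' r' d' s' where h: "c' \<in> {0..1}" "r' > 0" "d' \<in> {0..1}" "s' > 0"
     "BB c' r' \<subseteq> BB c r" "BB d' s' \<subseteq> BB d s"
     "\<forall>n<n0. comp_seq f n ` BB c' r' \<inter> BB d' s' = {}" by blast
  define z where "z = comp_seq f n0 c'"
  obtain y where y: "y \<in> {0..1}" "\<bar>y - d'\<bar> < s'" "y \<noteq> z"
  proof (cases "d' = z")
    case False then show ?thesis using that h by auto
  next
    case True
    show ?thesis
    proof (cases "d' \<le> 1/2")
      case True2: True
      show ?thesis using that[of "d' + min s' (1/2) / 2"] h True True2 by auto
    next
      case False
      show ?thesis using that[of "d' - min s' (1/2) / 2"] h True False by (auto simp: min_def)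
    qed
  qed
  define t where "t = \<bar>y - z\<bar>"
  have t: "t > 0" using y by (simp add: t_def)
  obtain e where e: "e > 0" "\<forall>x\<in>{0..1}. \<bar>x - c'\<bar> < e \<longrightarrow> \<bar>comp_seq f n0 x - z\<bar> < t/2"
    using F_cont_at[of c' "t/2" n0] h t unfolding z_def by auto
  define r'' where "r'' = min e r'"
  define s'' where "s'' = min (t/2) (s' - \<bar>y - d'\<bar>)"
  have sub1: "BB c' r'' \<subseteq> BB c' r'" "BB y s'' \<subseteq> BB d' s'"
    by (auto simp: BB_def r''_def s''_def)
  have disj: "comp_seq f n0 ` BB c' r'' \<inter> BB y s'' = {}"
  proof -
    { fix x assume x: "x \<in> BB c' r''" and fx: "comp_seq f n0 x \<in> BB y s''"
      have "\<bar>comp_seq f n0 x - z\<bar> < t/2" using e x by (auto simp: BB_def r''_def)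
      moreover have "\<bar>comp_seq f n0 x - y\<bar> < t/2" using fx by (auto simp: BB_def s''_def)
      ultimately have False unfolding t_def by (simp add: abs_if split: if_splits) }
    then show ?thesis by blast
  qed
  show ?case
    apply (rule exI[of _ c'], rule exI[of _ r''], rule exI[of _ y], rule exI[of _ s''])
    using h sub1 disj e y t
    apply (auto simp: r''_def s''_def less_Suc_eq)
    by blast+
qed

end


locale sys3 = sys +
  assumes wm: "weakly_mixing_order 3 (subtopology euclideanreal {0..1}) f"
begin

lemma wm_large:
  fixes c r d s :: "nat \<Rightarrow> real"
  assumes "\<forall>i<3. c i \<in> {0..1} \<and> r i > 0 \<and> d i \<in> {0..1} \<and> s i > 0"
  shows "\<exists>n\<ge>n0. n \<ge> 1 \<and> (\<forall>i<3. \<exists>x\<in>BB (c i) (r i). comp_seq f n x \<in> BB (d i) (s i))"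
proof -
  obtain c' r' d' s' where h: "c' \<in> {0..1}" "r' > 0" "d' \<in> {0..1}" "s' > 0"
     "BB c' r' \<subseteq> BB (c 0) (r 0)" "BB d' s' \<subseteq> BB (d 0) (s 0)"
     "\<forall>n<n0. comp_seq f n ` BB c' r' \<inter> BB d' s' = {}"
    using shrink[of "c 0" "r 0" "d 0" "s 0" n0] assms by auto
  define U where "U i = (if i = 0 then BB c' r' else BB (c i) (r i))" for i :: nat
  define V where "V i = (if i = 0 then BB d' s' else BB (d i) (s i))" for i :: nat
  have "\<forall>i<3. openin (subtopology euclideanreal {0..1}) (U i) \<and> U i \<noteq> {} \<and>
      openin (subtopology euclideanreal {0..1}) (V i) \<and> V i \<noteq> {}"
  proof (intro allI impI)
    fix i :: nat assume i: "i < 3"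
    have ne: "c i \<in> BB (c i) (r i)" "d i \<in> BB (d i) (s i)" using assms i by (auto intro!: BB_center)
    show "openin (subtopology euclideanreal {0..1}) (U i) \<and> U i \<noteq> {} \<and>
      openin (subtopology euclideanreal {0..1}) (V i) \<and> V i \<noteq> {}"
      using ne h BB_center[of c' r'] BB_center[of d' s'] by (auto simp: U_def V_def BB_open)
  qed
  then obtain n where n: "n \<ge> 1" "\<forall>i<3. comp_seq f n ` (U i) \<inter> V i \<noteq> {}"
    using wm unfolding weakly_mixing_order_def by blast
  have "n \<ge> n0"
  proof (rule ccontr)
    assume "\<not> n \<ge> n0"
    then have "comp_seq f n ` BB c' r' \<inter> BB d' s' = {}" using h by auto
    then show False using n(2)[rule_format, of 0] by (simp add: U_def V_def)
  qed
  moreover have "\<forall>i<3. \<exists>x\<in>BB (c i) (r i). comp_seq f n x \<in> BB (d i) (s i)"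
  proof (intro allI impI)
    fix i :: nat assume i: "i < 3"
    then obtain x where "x \<in> U i" "comp_seq f n x \<in> V i" using n(2) by blast
    then show "\<exists>x\<in>BB (c i) (r i). comp_seq f n x \<in> BB (d i) (s i)"
      using h by (cases "i = 0") (auto simp: U_def V_def)
  qed
  ultimately show ?thesis using n by blast
qed

lemma wm_large3:
  fixes c0 r0 d0 s0 c1 r1 d1 s1 c2 r2 d2 s2 :: real
  assumes "c0 \<in> {0..1}" "r0 > 0" "d0 \<in> {0..1}" "s0 > 0"
     "c1 \<in> {0..1}" "r1 > 0" "d1 \<in> {0..1}" "s1 > 0"
     "c2 \<in> {0..1}" "r2 > 0" "d2 \<in> {0..1}" "s2 > 0"
  shows "\<exists>n\<ge>n0. n \<ge> 1 \<and> (\<exists>x\<in>BB c0 r0. comp_seq f n x \<in> BB d0 s0)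
     \<and> (\<exists>x\<in>BB c1 r1. comp_seq f n x \<in> BB d1 s1) \<and> (\<exists>x\<in>BB c2 r2. comp_seq f n x \<in> BB d2 s2)"
proof -
  let ?c = "(\<lambda>i::nat. if i = 0 then c0 else if i = 1 then c1 else c2)"
  let ?r = "(\<lambda>i::nat. if i = 0 then r0 else if i = 1 then r1 else r2)"
  let ?d = "(\<lambda>i::nat. if i = 0 then d0 else if i = 1 then d1 else d2)"
  let ?s = "(\<lambda>i::nat. if i = 0 then s0 else if i = 1 then s1 else s2)"
  have "\<forall>i<3. ?c i \<in> {0..1} \<and> ?r i > 0 \<and> ?d i \<in> {0..1} \<and> ?s i > 0"
    using assms by auto
  from wm_large[OF this, of n0] obtain n where n: "n \<ge> n0" "n \<ge> 1"
    "\<forall>i<3. \<exists>x\<in>BB (?c i) (?r i). comp_seq f n x \<in> BB (?d i) (?s i)" by blast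
  have "\<exists>x\<in>BB c0 r0. comp_seq f n x \<in> BB d0 s0" using n(3)[rule_format, of 0] by simp
  moreover have "\<exists>x\<in>BB c1 r1. comp_seq f n x \<in> BB d1 s1" using n(3)[rule_format, of 1] by simp
  moreover have "\<exists>x\<in>BB c2 r2. comp_seq f n x \<in> BB d2 s2" using n(3)[rule_format, of 2] by simp
  ultimately show ?thesis using n by blast
qed

lemma cover_Icc:
  assumes "p \<in> BB c r" "q \<in> BB c r" "comp_seq f n p \<le> a" "comp_seq f n q \<ge> b"
  shows "{a..b} \<subseteq> comp_seq f n ` BB c r"
proof -
  have "connected (comp_seq f n ` BB c r)"
    using BB_connected BB_sub F_cont by (metis connected_continuous_image continuous_on_subset)
  then show ?thesis using assms unfolding connected_iff_interval
    by (smt (verit, ccfv_threshold) atLeastAtMost_iff image_eqI subsetI)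
qed

lemma S1:
  assumes "x \<in> {0..1}" "s > 0" "e > 0" "e < 1/2"
  shows "\<exists>m\<ge>n0. m \<ge> 1 \<and> {e..1-e} \<subseteq> comp_seq f m ` BB x s"
proof -
  have "\<exists>m\<ge>n0. m \<ge> 1 \<and> (\<exists>p\<in>BB x s. comp_seq f m p \<in> BB 0 e)
     \<and> (\<exists>p\<in>BB x s. comp_seq f m p \<in> BB 1 e) \<and> (\<exists>p\<in>BB x s. comp_seq f m p \<in> BB 0 e)"
    by (rule wm_large3) (use assms in auto)
  then obtain m p q where m: "m \<ge> n0" "m \<ge> 1" "p \<in> BB x s" "comp_seq f m p \<in> BB 0 e"
    "q \<in> BB x s" "comp_seq f m q \<in> BB 1 e" by blast
  have "comp_seq f m p \<le> e" "comp_seq f m q \<ge> 1 - e" using m(4,6) by (auto simp: BB_def)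
  then have "{e..1-e} \<subseteq> comp_seq f m ` BB x s" by (rule cover_Icc[OF m(3,5)])
  then show ?thesis using m(1,2) by blast
qed

lemma D2:
  assumes "c \<in> {0..1}" "r > 0" "x \<in> {0..1}" "s > 0"
  shows "\<exists>n\<ge>n0. \<exists>x' s'. x' \<in> {0..1} \<and> s' > 0 \<and> BB x' s' \<subseteq> BB x s \<and>
     comp_seq f n ` BB x' s' \<subseteq> comp_seq f n ` BB c r"
proof -
  have "\<exists>n\<ge>n0. n \<ge> 1 \<and> (\<exists>p\<in>BB c r. comp_seq f n p \<in> BB 0 (1/4))
     \<and> (\<exists>p\<in>BB c r. comp_seq f n p \<in> BB 1 (1/4)) \<and> (\<exists>p\<in>BB x s. comp_seq f n p \<in> BB (1/2) (1/4))"
    by (rule wm_large3) (use assms in auto)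
  then obtain n p q z where n: "n \<ge> n0" and pq: "p \<in> BB c r" "comp_seq f n p \<in> BB 0 (1/4)"
    "q \<in> BB c r" "comp_seq f n q \<in> BB 1 (1/4)" and z: "z \<in> BB x s" "comp_seq f n z \<in> BB (1/2) (1/4)"
    by blast
  have "comp_seq f n p \<le> 1/4" "comp_seq f n q \<ge> 3/4" using pq(2,4) by (auto simp: BB_def)
  then have cov: "{1/4..3/4} \<subseteq> comp_seq f n ` BB c r" by (rule cover_Icc[OF pq(1,3)])
  define t where "t = min (comp_seq f n z - 1/4) (3/4 - comp_seq f n z)"
  have t: "t > 0" using z by (auto simp: BB_def t_def abs_if split: if_splits)
  have zI: "z \<in> {0..1}" using z BB_sub by blast
  obtain e where e: "e > 0" "\<forall>y\<in>{0..1}. \<bar>y - z\<bar> < e \<longrightarrow> \<bar>comp_seq f n y - comp_seq f n z\<bar> < t"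
    using F_cont_at[OF zI t] by blast
  define s' where "s' = min e (s - \<bar>z - x\<bar>)"
  have s': "s' > 0" using e z by (auto simp: s'_def BB_def)
  have sub: "BB z s' \<subseteq> BB x s" by (auto simp: BB_def s'_def)
  have "comp_seq f n ` BB z s' \<subseteq> {1/4..3/4}"
  proof
    fix w assume "w \<in> comp_seq f n ` BB z s'"
    then obtain y where y: "y \<in> BB z s'" "w = comp_seq f n y" by blast
    then have "\<bar>comp_seq f n y - comp_seq f n z\<bar> < t" using e by (auto simp: BB_def s'_def)
    then show "w \<in> {1/4..3/4}" using y(2) by (auto simp: t_def abs_if split: if_splits)
  qed
  then show ?thesis using cov sub s' zI n by blast
qed

lemma common:
  assumes "\<forall>(c,r)\<in>set cs. c \<in> {0..1} \<and> r > 0"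
  shows "\<exists>n\<ge>n0. \<exists>x s. x \<in> {0..1} \<and> s > 0 \<and>
     (\<forall>(c,r)\<in>set cs. comp_seq f n ` BB x s \<subseteq> comp_seq f n ` BB c r)"
  using assms
proof (induction cs)
  case Nil show ?case by (rule exI[of _ n0]) (auto intro!: exI[of _ "0::real"] exI[of _ "1::real"])
next
  case (Cons cr cs)
  obtain c r where cr: "cr = (c, r)" by fastforce
  from Cons obtain n1 x1 s1 where h: "n1 \<ge> n0" "x1 \<in> {0..1}" "s1 > 0"
    "\<forall>(c,r)\<in>set cs. comp_seq f n1 ` BB x1 s1 \<subseteq> comp_seq f n1 ` BB c r" by auto
  have "c \<in> {0..1}" "r > 0" using Cons.prems cr by auto
  from D2[OF this h(2,3), of n1] obtain n x' s' where h2: "n \<ge> n1" "x' \<in> {0..1}" "s' > 0"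
    "BB x' s' \<subseteq> BB x1 s1" "comp_seq f n ` BB x' s' \<subseteq> comp_seq f n ` BB c r" by blast
  have "\<forall>(c,r)\<in>set cs. comp_seq f n ` BB x' s' \<subseteq> comp_seq f n ` BB c r"
  proof (rule ballI)
    fix cr' assume cr': "cr' \<in> set cs"
    obtain c' r' where e: "cr' = (c', r')" by fastforce
    have "comp_seq f n1 ` BB x1 s1 \<subseteq> comp_seq f n1 ` BB c' r'" using h(4) cr' e by fastforce
    then have "comp_seq f n ` BB x1 s1 \<subseteq> comp_seq f n ` BB c' r'" using dominate h2(1) by blast
    then have "comp_seq f n ` BB x' s' \<subseteq> comp_seq f n ` BB c' r'" using h2(4) by blast
    then show "case cr' of (c, r) \<Rightarrow> comp_seq f n ` BB x' s' \<subseteq> comp_seq f n ` BB c r"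
      using e by simp
  qed
  then show ?case using h2 h cr by (intro exI[of _ n]) auto
qed

lemma hit:
  assumes "finite P" "P \<subseteq> {0..1} \<times> {0..1}" "dl > 0"
  shows "\<exists>n\<ge>1. \<exists>ch. (\<forall>p. ch p \<in> {0..1}) \<and>
     (\<forall>(a,b)\<in>P. \<bar>ch (a,b) - a\<bar> < dl \<and> \<bar>comp_seq f n (ch (a,b)) - b\<bar> < dl)"
proof -
  obtain xs where xs: "set xs = fst ` P" using finite_list[of "fst ` P"] assms(1) by auto
  let ?cs = "map (\<lambda>a. (a, dl)) xs"
  have "\<forall>(c,r)\<in>set ?cs. c \<in> {0..1} \<and> r > 0" using xs assms by auto
  from common[OF this, of 0] obtain n1 x s where h: "x \<in> {0..1}" "s > 0"
    "\<forall>(c,r)\<in>set ?cs. comp_seq f n1 ` BB x s \<subseteq> comp_seq f n1 ` BB c r"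
    by (elim exE conjE) (rule that)
  define e where "e = min (dl/2) (1/4)"
  have e: "e > 0" "e < 1/2" "e < dl" using assms(3) by (auto simp: e_def)
  from S1[OF h(1,2) e(1,2), of n1] obtain m where m: "m \<ge> n1" "m \<ge> 1"
    "{e..1-e} \<subseteq> comp_seq f m ` BB x s" by (elim exE conjE) (rule that)
  have key: "\<exists>y. y \<in> {0..1} \<and> \<bar>y - a\<bar> < dl \<and> \<bar>comp_seq f m y - b\<bar> < dl" if ab: "(a,b) \<in> P" for a b
  proof -
    have "(a, dl) \<in> set ?cs" using ab xs by force
    then have "comp_seq f n1 ` BB x s \<subseteq> comp_seq f n1 ` BB a dl" using h(3) by fastforce
    then have sub: "comp_seq f m ` BB x s \<subseteq> comp_seq f m ` BB a dl" using dominate m(1) by blast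
    define b' where "b' = max e (min (1-e) b)"
    have "b' \<in> {e..1-e}" using e by (auto simp: b'_def)
    then have "b' \<in> comp_seq f m ` BB a dl" using m(3) sub by (meson subsetD)
    then obtain y where y: "y \<in> BB a dl" "comp_seq f m y = b'" by (metis imageE)
    have "b \<in> {0..1}" using ab assms(2) by auto
    then have "\<bar>b' - b\<bar> < dl" using e by (auto simp: b'_def)
    moreover have "y \<in> {0..1}" "\<bar>y - a\<bar> < dl" using y(1) by (auto simp: BB_def)
    ultimately show ?thesis using y(2) by blast
  qed
  define ch where "ch p = (if p \<in> P then (SOME y. y \<in> {0..1} \<and> \<bar>y - fst p\<bar> < dl \<and> \<bar>comp_seq f m y - snd p\<bar> < dl) else 0)" for p
  have "\<forall>p. ch p \<in> {0..1}"
  proof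
    fix p show "ch p \<in> {0..1}"
    proof (cases "p \<in> P")
      case True
      then obtain a b where "p = (a,b)" "(a,b) \<in> P" by (cases p) auto
      then show ?thesis using someI_ex[OF key[of a b]] by (simp add: ch_def)
    qed (simp add: ch_def)
  qed
  moreover have "\<forall>(a,b)\<in>P. \<bar>ch (a,b) - a\<bar> < dl \<and> \<bar>comp_seq f m (ch (a,b)) - b\<bar> < dl"
  proof clarify
    fix a b assume ab: "(a,b) \<in> P"
    show "\<bar>ch (a,b) - a\<bar> < dl \<and> \<bar>comp_seq f m (ch (a,b)) - b\<bar> < dl"
      using someI_ex[OF key[OF ab]] ab by (simp add: ch_def)
  qed
  ultimately show ?thesis using m(2) by blast
qed

end


abbreviation "PM \<equiv> prob_measures_I"

lemma space_borel_I: "space borel_I = {0..1}" by (simp add: borel_I_def space_restrict_space)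

lemma cont_meas: "continuous_on {0..1} g \<Longrightarrow> (g::real\<Rightarrow>real) \<in> borel_measurable borel_I"
  unfolding borel_I_def by (rule borel_measurable_continuous_on_restrict)

lemma cont_meas_I: "continuous_on {0..1} h \<Longrightarrow> h ` {0..1} \<subseteq> {0..1} \<Longrightarrow> h \<in> measurable borel_I borel_I"
  apply (subst (2) borel_I_def)
  apply (rule measurable_restrict_space2)
  using space_borel_I cont_meas by auto

lemma PM_D: assumes "\<mu> \<in> PM" shows "prob_space \<mu>" "sets \<mu> = sets borel_I" "space \<mu> = {0..1}"
  using assms space_borel_I by (auto simp: prob_measures_I_def dest: sets_eq_imp_space_eq)

lemma PM_meas: "\<mu> \<in> PM \<Longrightarrow> measurable \<mu> X = measurable borel_I X"
  using PM_D(2) by (rule measurable_cong_sets) auto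

lemma cont_bounded: "continuous_on {0..1} (g::real\<Rightarrow>real) \<Longrightarrow> \<exists>B. \<forall>x\<in>{0..1}. \<bar>g x\<bar> \<le> B"
proof -
  assume "continuous_on {0..1} g"
  then have "compact (g ` {0..1})" by (intro compact_continuous_image) auto
  then have "bounded (g ` {0..1})" by (rule compact_imp_bounded)
  then show ?thesis unfolding bounded_real by auto
qed

lemma integ: fixes g :: "real \<Rightarrow> real" assumes "\<mu> \<in> PM" "continuous_on {0..1} g" shows "integrable \<mu> g"
proof -
  obtain B where B: "\<forall>x\<in>{0..1}. \<bar>g x\<bar> \<le> B" using cont_bounded assms(2) by blast
  interpret prob_space \<mu> using PM_D[OF assms(1)] by simp
  show ?thesis
    by (rule integrable_const_bound[of _ B]) (use B PM_D[OF assms(1)] PM_meas[OF assms(1)] cont_meas[OF assms(2)] in auto)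
qed

lemma intdiff:
  fixes a b :: "'a \<Rightarrow> real"
  assumes "prob_space M" "integrable M a" "integrable M b" "\<forall>x\<in>space M. \<bar>a x - b x\<bar> \<le> c"
  shows "\<bar>(\<integral>x. a x \<partial>M) - (\<integral>x. b x \<partial>M)\<bar> \<le> c"
proof -
  interpret prob_space M by fact
  have 1: "(\<integral>x. a x - b x \<partial>M) \<le> c"
    by (rule integral_le_const) (use assms in \<open>auto intro!: AE_I2 simp: abs_le_iff\<close>)
  have 2: "(\<integral>x. b x - a x \<partial>M) \<le> c"
    by (rule integral_le_const) (use assms in \<open>auto intro!: AE_I2 simp: abs_le_iff\<close>)
  show ?thesis using 1 2 Bochner_Integration.integral_diff[OF assms(2,3)] Bochner_Integration.integral_diff[OF assms(3,2)] by linarith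
qed

lemma dirac_PM: "x \<in> {0..1} \<Longrightarrow> return borel_I x \<in> PM"
  unfolding prob_measures_I_def using space_borel_I by (auto intro: prob_space_return)

lemma dirac_int: fixes g :: "real \<Rightarrow> real" shows "x \<in> {0..1} \<Longrightarrow> continuous_on {0..1} g \<Longrightarrow> (\<integral>t. g t \<partial>return borel_I x) = g x"
  by (rule integral_return) (auto simp: space_borel_I cont_meas)

lemma distr_PM: "\<mu> \<in> PM \<Longrightarrow> h \<in> measurable borel_I borel_I \<Longrightarrow> distr \<mu> borel_I h \<in> PM"
  unfolding prob_measures_I_def
  using prob_space.prob_space_distr[of \<mu> h borel_I] PM_meas[of \<mu>] PM_D[of \<mu>] by auto

lemma floor_meas: "(\<lambda>x::real. \<lfloor>c * x\<rfloor>) \<in> measurable borel_I (count_space UNIV)"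
proof -
  have "(\<lambda>x::real. c * x) \<in> borel_measurable borel_I"
    by (intro cont_meas continuous_intros)
  from measurable_comp[OF this measurable_real_floor] show ?thesis by (simp add: comp_def)
qed

lemma phi_meas:
  assumes "sets \<mu> = sets borel_I" "sets \<nu> = sets borel_I" "\<forall>i. Phi i \<in> {0..1}"
  shows "(\<lambda>z. Phi (\<lfloor>c * fst z\<rfloor>, \<lfloor>c * snd z\<rfloor>)) \<in> measurable (\<mu> \<Otimes>\<^sub>M \<nu>) borel_I"
proof -
  have e: "measurable (\<mu> \<Otimes>\<^sub>M \<nu>) borel_I = measurable (borel_I \<Otimes>\<^sub>M borel_I) borel_I"
    by (rule measurable_cong_sets[OF sets_pair_measure_cong[OF assms(1,2)] refl])
  have f1: "(\<lambda>z. \<lfloor>c * fst z\<rfloor>) \<in> measurable (borel_I \<Otimes>\<^sub>M borel_I) (count_space UNIV)"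
    using measurable_comp[OF measurable_fst floor_meas] by (simp add: comp_def)
  have f2: "(\<lambda>z. \<lfloor>c * snd z\<rfloor>) \<in> measurable (borel_I \<Otimes>\<^sub>M borel_I) (count_space UNIV)"
    using measurable_comp[OF measurable_snd floor_meas] by (simp add: comp_def)
  have "(\<lambda>z. (\<lambda>k. Phi (k, \<lfloor>c * snd z\<rfloor>)) (\<lfloor>c * fst z\<rfloor>)) \<in> measurable (borel_I \<Otimes>\<^sub>M borel_I) borel_I"
  proof (rule measurable_compose_countable[where g = "\<lambda>z. \<lfloor>c * fst z\<rfloor>" and f = "\<lambda>k z. Phi (k, \<lfloor>c * snd z\<rfloor>)"])
    fix k :: int
    show "(\<lambda>z. Phi (k, \<lfloor>c * snd z\<rfloor>)) \<in> measurable (borel_I \<Otimes>\<^sub>M borel_I) borel_I"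
      by (rule measurable_compose_countable[where g = "\<lambda>z. \<lfloor>c * snd z\<rfloor>" and f = "\<lambda>l z. Phi (k, l)"])
         (use assms(3) space_borel_I f2 in auto)
  qed (rule f1)
  then show ?thesis using e by simp
qed


definition NB :: "real measure \<Rightarrow> (real \<Rightarrow> real) set \<Rightarrow> real \<Rightarrow> real measure set" where
  "NB \<mu> G e = {\<nu> \<in> PM. \<forall>g\<in>G. \<bar>(\<integral>x. g x \<partial>\<nu>) - (\<integral>x. g x \<partial>\<mu>)\<bar> < e}"

definition nb :: "real measure set \<Rightarrow> real measure \<Rightarrow> bool" where
  "nb S \<mu> \<longleftrightarrow> \<mu> \<in> PM \<and> (\<exists>G e. finite G \<and> e > 0 \<and> (\<forall>g\<in>G. continuous_on {0..1} g) \<and> NB \<mu> G e \<subseteq> S)"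

lemma nb_mono: "nb S \<mu> \<Longrightarrow> S \<subseteq> T \<Longrightarrow> nb T \<mu>"
  unfolding nb_def by (meson order_trans)

lemma NB_Int: "NB \<mu> (G1 \<union> G2) (min e1 e2) \<subseteq> NB \<mu> G1 e1 \<inter> NB \<mu> G2 e2"
  unfolding NB_def by auto

lemma nb_Int: "nb a \<mu> \<Longrightarrow> nb b \<mu> \<Longrightarrow> nb (a \<inter> b) \<mu>"
proof -
  assume A: "nb a \<mu>" and B: "nb b \<mu>"
  from A obtain G1 e1 where 1: "\<mu> \<in> PM" "finite G1" "e1 > 0" "\<forall>g\<in>G1. continuous_on {0..1} g" "NB \<mu> G1 e1 \<subseteq> a"
    unfolding nb_def by blast
  from B obtain G2 e2 where 2: "finite G2" "e2 > 0" "\<forall>g\<in>G2. continuous_on {0..1} g" "NB \<mu> G2 e2 \<subseteq> b"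
    unfolding nb_def by blast
  have "NB \<mu> (G1 \<union> G2) (min e1 e2) \<subseteq> a \<inter> b" using NB_Int 1(5) 2(4) by blast
  moreover have "finite (G1 \<union> G2)" "min e1 e2 > 0" "\<forall>g\<in>G1 \<union> G2. continuous_on {0..1} g"
    using 1 2 by auto
  ultimately show ?thesis unfolding nb_def using 1(1) by blast
qed

lemma nbhd0:
  assumes "openin weak_star_topology_I S"
  shows "\<forall>\<mu>\<in>S. nb S \<mu>"
proof -
  have "generate_topology_on {{\<mu> \<in> prob_measures_I. (\<integral>x. g x \<partial>\<mu>) \<in> W} | (g :: real \<Rightarrow> real) (W :: real set).
        continuous_on {0..1} g \<and> open W} S"
    using assms unfolding weak_star_topology_I_def openin_topology_generated_by_iff .
  then show ?thesis
  proof (induction rule: generate_topology_on.induct)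
    case Empty then show ?case by simp
  next
    case (Int a b)
    show ?case
    proof
      fix \<mu> assume m: "\<mu> \<in> a \<inter> b"
      then have "nb a \<mu>" "nb b \<mu>" using Int.IH by auto
      then show "nb (a \<inter> b) \<mu>" by (rule nb_Int)
    qed
  next
    case (UN K)
    show ?case
    proof
      fix \<mu> assume "\<mu> \<in> \<Union>K"
      then obtain k where k: "k \<in> K" "\<mu> \<in> k" by blast
      then have "nb k \<mu>" using UN.IH by blast
      then show "nb (\<Union>K) \<mu>" by (rule nb_mono) (use k in blast)
    qed
  next
    case (Basis s)
    have "\<exists>(g::real\<Rightarrow>real) (W::real set). s = {\<mu> \<in> PM. (\<integral>x. g x \<partial>\<mu>) \<in> W} \<and> continuous_on {0..1} g \<and> open W"
      using Basis.hyps by (simp only: mem_Collect_eq)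
    then show ?case
    proof (elim exE conjE)
      fix g :: "real \<Rightarrow> real" and W :: "real set" assume s1: "s = {\<mu> \<in> PM. (\<integral>x. g x \<partial>\<mu>) \<in> W}" and s2: "continuous_on {0..1} g"
        and s3: "open W"
      show "\<forall>\<mu>\<in>s. nb s \<mu>"
      proof
        fix \<mu> assume m: "\<mu> \<in> s"
        then have "(\<integral>x. g x \<partial>\<mu>) \<in> W" using s1 by auto
        then obtain e where e: "e > 0" "ball (\<integral>x. g x \<partial>\<mu>) e \<subseteq> W" using s3 open_contains_ball by blast
        have "NB \<mu> {g} e \<subseteq> s"
          using e s1 by (auto simp: NB_def dist_real_def abs_minus_commute)
        moreover have "\<mu> \<in> PM" using m s1 by auto
        ultimately show "nb s \<mu>" unfolding nb_def using e(1) s2 by (intro conjI exI[of _ "{g}"] exI[of _ e]) auto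
      qed
    qed
  qed
qed

lemma nbhd:
  assumes "openin weak_star_topology_I S" "\<mu> \<in> S"
  obtains G e where "\<mu> \<in> PM" "finite G" "e > 0" "\<forall>g\<in>G. continuous_on {0..1} g" "NB \<mu> G e \<subseteq> S"
  using nbhd0[OF assms(1)] assms(2) unfolding nb_def by blast


lemma unif_fin:
  assumes "finite GG" "\<forall>g\<in>GG. continuous_on {0..1} (g::real\<Rightarrow>real)" "eta > 0"
  shows "\<exists>d>0. \<forall>g\<in>GG. \<forall>x\<in>{0..1}. \<forall>y\<in>{0..1}. \<bar>x - y\<bar> < d \<longrightarrow> \<bar>g x - g y\<bar> < eta"
  using assms
proof (induction GG rule: finite_induct)
  case empty then show ?case by (auto intro: exI[of _ 1])
next
  case (insert g GG)
  then obtain d1 where d1: "d1 > 0" "\<forall>g\<in>GG. \<forall>x\<in>{0..1}. \<forall>y\<in>{0..1}. \<bar>x - y\<bar> < d1 \<longrightarrow> \<bar>g x - g y\<bar> < eta"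
    by auto
  have "uniformly_continuous_on {0..1} g"
    using insert.prems by (intro compact_uniformly_continuous) auto
  then obtain d2 where d2: "d2 > 0" "\<forall>x\<in>{0..1}. \<forall>y\<in>{0..1}. dist y x < d2 \<longrightarrow> dist (g y) (g x) < eta"
    unfolding uniformly_continuous_on_def using insert.prems(2) by metis
  show ?case
    using d1 d2 by (intro exI[of _ "min d1 d2"]) (auto simp: dist_real_def abs_minus_commute)
qed


lemma distr_pair_snd':
  assumes "prob_space \<mu>" "prob_space \<nu>"
  shows "distr (\<mu> \<Otimes>\<^sub>M \<nu>) \<nu> snd = \<nu>"
proof -
  interpret p: pair_prob_space \<mu> \<nu>
    using assms by (simp add: pair_prob_space_def pair_sigma_finite_def prob_space_imp_sigma_finite)
  have "distr (\<mu> \<Otimes>\<^sub>M \<nu>) \<nu> snd = distr (distr (\<nu> \<Otimes>\<^sub>M \<mu>) (\<mu> \<Otimes>\<^sub>M \<nu>) (\<lambda>(x, y). (y, x))) \<nu> snd"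
    using p.distr_pair_swap by simp
  also have "\<dots> = distr (\<nu> \<Otimes>\<^sub>M \<mu>) \<nu> (snd \<circ> (\<lambda>(x, y). (y, x)))"
    by (rule distr_distr) (auto intro: measurable_pair_swap')
  also have "\<dots> = distr (\<nu> \<Otimes>\<^sub>M \<mu>) \<nu> fst"
    by (rule distr_cong) (auto simp: space_pair_measure)
  also have "\<dots> = \<nu>" by (rule prob_space.distr_pair_fst[OF assms(1)])
  finally show ?thesis .
qed


lemma int_close:
  fixes g :: "real \<Rightarrow> real"
  assumes "prob_space M" "a \<in> measurable M borel_I" "b \<in> measurable M borel_I"
    "continuous_on {0..1} g" "\<forall>z\<in>space M. \<bar>g (a z) - g (b z)\<bar> \<le> c"
  shows "\<bar>(\<integral>z. g (a z) \<partial>M) - (\<integral>z. g (b z) \<partial>M)\<bar> \<le> c"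
proof -
  have PMa: "distr M borel_I a \<in> PM" "distr M borel_I b \<in> PM"
    unfolding prob_measures_I_def using prob_space.prob_space_distr[OF assms(1)] assms(2,3) by auto
  have "integrable (distr M borel_I a) g" "integrable (distr M borel_I b) g"
    using integ PMa assms(4) by auto
  then have "integrable M (\<lambda>z. g (a z))" "integrable M (\<lambda>z. g (b z))"
    using integrable_distr_eq[OF assms(2), of g] integrable_distr_eq[OF assms(3), of g]
      cont_meas[OF assms(4)] by auto
  then show ?thesis using intdiff[OF assms(1)] assms(5) by blast
qed


context sys begin

lemma F_meas: "comp_seq f n \<in> measurable borel_I borel_I"
  using F_cont F_self by (intro cont_meas_I) auto

lemma push_iter:
  assumes "\<mu> \<in> PM"
  shows "comp_seq (\<lambda>n. pushforward_I (f n)) (Suc n) \<mu> = distr \<mu> borel_I (comp_seq f (Suc n))"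
proof (induction n)
  case 0 then show ?case by (simp add: pushforward_I_def)
next
  case (Suc n)
  have m1: "f (Suc (Suc n)) \<in> measurable borel_I borel_I"
    using cont self by (intro cont_meas_I) auto
  have m2: "comp_seq f (Suc n) \<in> measurable \<mu> borel_I"
    unfolding PM_meas[OF assms] by (rule F_meas)
  have "comp_seq (\<lambda>n. pushforward_I (f n)) (Suc (Suc n)) \<mu> =
     pushforward_I (f (Suc (Suc n))) (comp_seq (\<lambda>n. pushforward_I (f n)) (Suc n) \<mu>)" by simp
  also have "\<dots> = distr (distr \<mu> borel_I (comp_seq f (Suc n))) borel_I (f (Suc (Suc n)))"
    by (subst Suc.IH) (simp add: pushforward_I_def)
  also have "\<dots> = distr \<mu> borel_I (f (Suc (Suc n)) \<circ> comp_seq f (Suc n))"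
    by (rule distr_distr[OF m1 m2])
  also have "\<dots> = distr \<mu> borel_I (comp_seq f (Suc (Suc n)))" by simp
  finally show ?case .
qed

end


definition bump :: "real \<Rightarrow> real \<Rightarrow> real \<Rightarrow> real" where
  "bump c r t = max 0 (1 - \<bar>t - c\<bar> * inverse r)"

lemma bump_cont: "continuous_on A (bump c r)"
  unfolding bump_def by (intro continuous_intros)

lemma bump_ge0: "bump c r t \<ge> 0" by (simp add: bump_def)
lemma bump_le1: "r > 0 \<Longrightarrow> bump c r t \<le> 1" by (simp add: bump_def)
lemma bump_c: "r > 0 \<Longrightarrow> bump c r c = 1" by (simp add: bump_def)
lemma bump_pos: "r > 0 \<Longrightarrow> bump c r t > 0 \<Longrightarrow> \<bar>t - c\<bar> < r"
proof -
  assume r: "r > 0" and b: "bump c r t > 0"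
  then have "\<bar>t - c\<bar> * inverse r < 1" by (auto simp: bump_def max_def split: if_splits)
  then show ?thesis using r by (simp add: field_simps)
qed

lemma open_BB:
  assumes "openin (subtopology euclideanreal {0..1}) U" "x \<in> U"
  shows "\<exists>r>0. BB x r \<subseteq> U"
proof -
  obtain T where T: "open T" "U = T \<inter> {0..1}" using assms(1) by (auto simp: openin_subtopology)
  then obtain r where r: "r > 0" "ball x r \<subseteq> T" using assms(2) open_contains_ball by blast
  have "BB x r \<subseteq> U" using r T by (auto simp: BB_def dist_real_def)
  then show ?thesis using r by blast
qed

lemma choice4:
  assumes "\<forall>i<(k::nat). \<exists>a b c d. P i a b c d"
  shows "\<exists>A B C D. \<forall>i<k. P i (A i) (B i) (C i) (D i)"
proof -
  have "\<forall>i. \<exists>q. i < k \<longrightarrow> P i (fst q) (fst (snd q)) (fst (snd (snd q))) (snd (snd (snd q)))"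
    using assms by force
  from choice[OF this] obtain Q where
    "\<forall>i. i < k \<longrightarrow> P i (fst (Q i)) (fst (snd (Q i))) (fst (snd (snd (Q i)))) (snd (snd (snd (Q i))))"
    by blast
  then show ?thesis by (intro exI[of _ "\<lambda>i. fst (Q i)"] exI[of _ "\<lambda>i. fst (snd (Q i))"]
     exI[of _ "\<lambda>i. fst (snd (snd (Q i)))"] exI[of _ "\<lambda>i. snd (snd (snd (Q i)))"]) auto
qed

lemma basis_open:
  fixes g :: "real \<Rightarrow> real" and W :: "real set"
  assumes "continuous_on {0..1} g" "open W"
  shows "openin weak_star_topology_I {\<mu> \<in> PM. (\<integral>t. g t \<partial>\<mu>) \<in> W}"
  unfolding weak_star_topology_I_def
  apply (rule topology_generated_by_Basis)
  apply (simp only: mem_Collect_eq)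
  apply (intro exI[of _ g] exI[of _ W] conjI)
  using assms by auto

context sys begin

lemma back_one:
  assumes m: "\<mu> \<in> PM" and r: "r > 0" and s: "s > 0"
    and a: "(\<integral>t. bump x r t \<partial>\<mu>) > 1/2"
    and b: "(\<integral>t. bump y s t \<partial>distr \<mu> borel_I (comp_seq f n)) > 1/2"
  shows "\<exists>t\<in>BB x r. comp_seq f n t \<in> BB y s"
proof -
  interpret prob_space \<mu> using PM_D[OF m] by simp
  have Fm: "comp_seq f n \<in> measurable \<mu> borel_I" unfolding PM_meas[OF m] by (rule F_meas)
  have b': "(\<integral>t. bump y s (comp_seq f n t) \<partial>\<mu>) > 1/2"
    using b integral_distr[OF Fm cont_meas[OF bump_cont]] by simp
  have ia: "integrable \<mu> (bump x r)" by (rule integ[OF m bump_cont])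
  have cF: "continuous_on {0..1} (\<lambda>t. bump y s (comp_seq f n t))"
    by (rule continuous_on_compose2[OF bump_cont[of UNIV] F_cont]) simp
  have ib: "integrable \<mu> (\<lambda>t. bump y s (comp_seq f n t))" by (rule integ[OF m cF])
  have "\<exists>t\<in>{0..1}. bump x r t + bump y s (comp_seq f n t) > 1"
  proof (rule ccontr)
    assume "\<not> ?thesis"
    then have "\<forall>t\<in>space \<mu>. bump x r t + bump y s (comp_seq f n t) \<le> 1" using PM_D(3)[OF m] by auto
    then have "(\<integral>t. bump x r t + bump y s (comp_seq f n t) \<partial>\<mu>) \<le> 1"
      by (intro integral_le_const AE_I2 Bochner_Integration.integrable_add ia ib) auto
    then show False using a b' Bochner_Integration.integral_add[OF ia ib] by simp
  qed
  then obtain t where t: "t \<in> {0..1}" "bump x r t + bump y s (comp_seq f n t) > 1" by blast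
  have "bump x r t > 0" using t(2) bump_le1[OF s, of y "comp_seq f n t"] by linarith
  moreover have "bump y s (comp_seq f n t) > 0" using t(2) bump_le1[OF r, of x t] by linarith
  ultimately have "t \<in> BB x r" "comp_seq f n t \<in> BB y s"
    using bump_pos[OF r] bump_pos[OF s] t(1) F_self[OF t(1)] by (auto simp: BB_def)
  then show ?thesis by blast
qed

lemma back_dir:
  assumes W: "weakly_mixing_order 3 weak_star_topology_I (\<lambda>n. pushforward_I (f n))"
  shows "weakly_mixing_order 3 (subtopology euclideanreal {0..1}) f"
  unfolding weakly_mixing_order_def
proof (intro allI impI)
  fix U V :: "nat \<Rightarrow> real set"
  assume A: "\<forall>i<3. openin (subtopology euclideanreal {0..1}) (U i) \<and> U i \<noteq> {} \<and>
        openin (subtopology euclideanreal {0..1}) (V i) \<and> V i \<noteq> {}"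
  have "\<forall>i<3. \<exists>x r y s. x \<in> {0..1} \<and> r > 0 \<and> BB x r \<subseteq> U i \<and> y \<in> {0..1} \<and> s > 0 \<and> BB y s \<subseteq> V i"
  proof (intro allI impI)
    fix i :: nat assume i: "i < 3"
    obtain x where x: "x \<in> U i" using A i by blast
    obtain y where y: "y \<in> V i" using A i by blast
    obtain r where r: "r > 0" "BB x r \<subseteq> U i" using open_BB[OF _ x] A i by blast
    obtain s where s: "s > 0" "BB y s \<subseteq> V i" using open_BB[OF _ y] A i by blast
    have "U i \<subseteq> {0..1}" "V i \<subseteq> {0..1}" using A i openin_imp_subset by blast+
    then have "x \<in> {0..1}" "y \<in> {0..1}" using x y by blast+
    then show "\<exists>x r y s. x \<in> {0..1} \<and> r > 0 \<and> BB x r \<subseteq> U i \<and> y \<in> {0..1} \<and> s > 0 \<and> BB y s \<subseteq> V i"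
      using r s by blast
  qed
  from choice4[OF this] obtain x r y s where xrys: "\<forall>i<3. x i \<in> {0..1} \<and> r i > 0 \<and> BB (x i) (r i) \<subseteq> U i \<and>
     y i \<in> {0..1} \<and> s i > 0 \<and> BB (y i) (s i) \<subseteq> V i" by blast
  define Ut where "Ut i = {\<mu> \<in> PM. (\<integral>t. bump (x i) (r i) t \<partial>\<mu>) \<in> {1/2<..}}" for i
  define Vt where "Vt i = {\<mu> \<in> PM. (\<integral>t. bump (y i) (s i) t \<partial>\<mu>) \<in> {1/2<..}}" for i
  have "\<forall>i<3. openin weak_star_topology_I (Ut i) \<and> Ut i \<noteq> {} \<and> openin weak_star_topology_I (Vt i) \<and> Vt i \<noteq> {}"
  proof (intro allI impI conjI)
    fix i :: nat assume i: "i < 3"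
    show "openin weak_star_topology_I (Ut i)" unfolding Ut_def by (rule basis_open[OF bump_cont]) simp
    show "openin weak_star_topology_I (Vt i)" unfolding Vt_def by (rule basis_open[OF bump_cont]) simp
    have "return borel_I (x i) \<in> Ut i" using xrys i
      by (auto simp: Ut_def dirac_PM dirac_int[OF _ bump_cont] bump_c)
    then show "Ut i \<noteq> {}" by blast
    have "return borel_I (y i) \<in> Vt i" using xrys i
      by (auto simp: Vt_def dirac_PM dirac_int[OF _ bump_cont] bump_c)
    then show "Vt i \<noteq> {}" by blast
  qed
  then obtain n where n: "n \<ge> 1" "\<forall>i<3. comp_seq (\<lambda>n. pushforward_I (f n)) n ` (Ut i) \<inter> Vt i \<noteq> {}"
    using W unfolding weakly_mixing_order_def by blast
  then obtain k where k: "n = Suc k" by (cases n) auto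
  have "\<forall>i<3. comp_seq f n ` U i \<inter> V i \<noteq> {}"
  proof (intro allI impI)
    fix i :: nat assume i: "i < 3"
    obtain \<mu> where mu: "\<mu> \<in> Ut i" "comp_seq (\<lambda>n. pushforward_I (f n)) n \<mu> \<in> Vt i" using n(2) i by blast
    have m: "\<mu> \<in> PM" using mu by (simp add: Ut_def)
    have "\<exists>t\<in>BB (x i) (r i). comp_seq f n t \<in> BB (y i) (s i)"
      apply (rule back_one[OF m])
      using xrys i mu push_iter[OF m, of k] k by (auto simp: Ut_def Vt_def)
    then show "comp_seq f n ` U i \<inter> V i \<noteq> {}" using xrys i by blast
  qed
  then show "\<exists>n\<ge>1. \<forall>i<3. comp_seq f n ` U i \<inter> V i \<noteq> {}" using n(1) by blast
qed

end


definition qz :: "nat \<Rightarrow> real \<Rightarrow> real" where "qz N x = real_of_int \<lfloor>real N * x\<rfloor> / real N"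

lemma qz_props:
  assumes "N > 0" "x \<in> {0..1}"
  shows "qz N x \<in> {0..1}" "\<bar>qz N x - x\<bar> < 1 / real N"
proof -
  have N: "real N > 0" using assms by simp
  have f1: "real_of_int \<lfloor>real N * x\<rfloor> \<le> real N * x" by simp
  have f2: "real N * x < real_of_int \<lfloor>real N * x\<rfloor> + 1" by simp
  have f0: "0 \<le> \<lfloor>real N * x\<rfloor>" using assms by simp
  have "qz N x \<le> x" using f1 N by (simp add: qz_def divide_le_eq mult.commute)
  moreover have "qz N x \<ge> 0" using f0 N by (simp add: qz_def)
  moreover have "x - qz N x < 1 / real N"
  proof -
    have "x - qz N x = (real N * x - real_of_int \<lfloor>real N * x\<rfloor>) / real N"
      using N by (simp add: qz_def field_simps)
    also have "\<dots> < 1 / real N" by (rule divide_strict_right_mono) (use f2 N in linarith)+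
    finally show ?thesis .
  qed
  ultimately show "qz N x \<in> {0..1}" "\<bar>qz N x - x\<bar> < 1 / real N" using assms by auto
qed

lemma qz_finite: "finite (qz N ` {0..1})"
proof -
  have "qz N ` {0..1} \<subseteq> (\<lambda>k. real_of_int k / real N) ` {0..int N}"
  proof
    fix y assume "y \<in> qz N ` {0..1}"
    then obtain x where x: "x \<in> {0..1}" "y = qz N x" by blast
    have "\<lfloor>real N * x\<rfloor> \<le> \<lfloor>real N * 1\<rfloor>" using x by (intro floor_mono mult_left_mono) auto
    then have "\<lfloor>real N * x\<rfloor> \<in> {0..int N}" using x by simp
    then show "y \<in> (\<lambda>k. real_of_int k / real N) ` {0..int N}" using x by (auto simp: qz_def)
  qed
  then show ?thesis by (rule finite_subset) simp
qed

lemma choice_lt: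
  assumes "\<forall>i<(k::nat). \<exists>x. P i x"
  shows "\<exists>X. \<forall>i<k. P i (X i)"
proof -
  have "\<forall>i. \<exists>x. i < k \<longrightarrow> P i x" using assms by blast
  from choice[OF this] show ?thesis by blast
qed

lemma NB_mem: "\<rho> \<in> PM \<Longrightarrow> \<forall>g\<in>G. \<bar>(\<integral>x. g x \<partial>\<rho>) - (\<integral>x. g x \<partial>\<mu>)\<bar> < e \<Longrightarrow> \<rho> \<in> NB \<mu> G e"
  by (simp add: NB_def)

context sys3 begin

lemma fwd: "weakly_mixing_order 3 weak_star_topology_I (\<lambda>n. pushforward_I (f n))"
  unfolding weakly_mixing_order_def
proof (intro allI impI)
  fix U V :: "nat \<Rightarrow> real measure set"
  assume A: "\<forall>i<3. openin weak_star_topology_I (U i) \<and> U i \<noteq> {} \<and> openin weak_star_topology_I (V i) \<and> V i \<noteq> {}"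
  have "\<forall>i<3. \<exists>m. m \<in> U i" using A by blast
  from choice_lt[OF this] obtain \<mu> where mu: "\<forall>i<3. \<mu> i \<in> U i" by blast
  have "\<forall>i<3. \<exists>m. m \<in> V i" using A by blast
  from choice_lt[OF this] obtain \<nu> where nu: "\<forall>i<3. \<nu> i \<in> V i" by blast
  have "\<forall>i<3. \<exists>p. \<mu> i \<in> PM \<and> finite (fst p) \<and> snd p > 0 \<and> (\<forall>g\<in>fst p. continuous_on {0..1} g) \<and> NB (\<mu> i) (fst p) (snd p) \<subseteq> U i"
  proof (intro allI impI)
    fix i :: nat assume i: "i < 3"
    obtain G e where "\<mu> i \<in> PM" "finite G" "e > 0" "\<forall>g\<in>G. continuous_on {0..1} g" "NB (\<mu> i) G e \<subseteq> U i"
      using nbhd[of "U i" "\<mu> i"] A mu i by blast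
    then show "\<exists>p. \<mu> i \<in> PM \<and> finite (fst p) \<and> snd p > 0 \<and> (\<forall>g\<in>fst p. continuous_on {0..1} g) \<and> NB (\<mu> i) (fst p) (snd p) \<subseteq> U i"
      by (intro exI[of _ "(G, e)"]) simp
  qed
  from choice_lt[OF this] obtain pU where pU: "\<forall>i<3. \<mu> i \<in> PM \<and> finite (fst (pU i)) \<and> snd (pU i) > 0 \<and>
     (\<forall>g\<in>fst (pU i). continuous_on {0..1} g) \<and> NB (\<mu> i) (fst (pU i)) (snd (pU i)) \<subseteq> U i" by blast
  have "\<forall>i<3. \<exists>p. \<nu> i \<in> PM \<and> finite (fst p) \<and> snd p > 0 \<and> (\<forall>g\<in>fst p. continuous_on {0..1} g) \<and> NB (\<nu> i) (fst p) (snd p) \<subseteq> V i"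
  proof (intro allI impI)
    fix i :: nat assume i: "i < 3"
    obtain G e where "\<nu> i \<in> PM" "finite G" "e > 0" "\<forall>g\<in>G. continuous_on {0..1} g" "NB (\<nu> i) G e \<subseteq> V i"
      using nbhd[of "V i" "\<nu> i"] A nu i by blast
    then show "\<exists>p. \<nu> i \<in> PM \<and> finite (fst p) \<and> snd p > 0 \<and> (\<forall>g\<in>fst p. continuous_on {0..1} g) \<and> NB (\<nu> i) (fst p) (snd p) \<subseteq> V i"
      by (intro exI[of _ "(G, e)"]) simp
  qed
  from choice_lt[OF this] obtain pV where pV: "\<forall>i<3. \<nu> i \<in> PM \<and> finite (fst (pV i)) \<and> snd (pV i) > 0 \<and>
     (\<forall>g\<in>fst (pV i). continuous_on {0..1} g) \<and> NB (\<nu> i) (fst (pV i)) (snd (pV i)) \<subseteq> V i" by blast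
  define GG where "GG = (\<Union>i<3. fst (pU i) \<union> fst (pV i))"
  have GGf: "finite GG" using pU pV by (auto simp: GG_def)
  have GGc: "\<forall>g\<in>GG. continuous_on {0..1} g" using pU pV by (auto simp: GG_def)
  define E where "E = (\<lambda>i. snd (pU i)) ` {..<3} \<union> (\<lambda>i. snd (pV i)) ` {..<3}"
  have Ef: "finite E" "E \<noteq> {}" by (auto simp: E_def lessThan_empty_iff)
  define e where "e = Min E"
  have epos: "e > 0" unfolding e_def using Ef pU pV by (auto simp: E_def Min_gr_iff)
  have eU: "\<forall>i<3. e \<le> snd (pU i)" unfolding e_def using Ef by (auto simp: E_def intro!: Min_le)
  have eV: "\<forall>i<3. e \<le> snd (pV i)" unfolding e_def using Ef by (auto simp: E_def intro!: Min_le)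
  obtain d where d: "d > 0" "\<forall>g\<in>GG. \<forall>x\<in>{0..1}. \<forall>y\<in>{0..1}. \<bar>x - y\<bar> < d \<longrightarrow> \<bar>g x - g y\<bar> < e/2"
    using unif_fin[OF GGf GGc half_gt_zero[OF epos]] by blast
  define N where "N = nat \<lceil>2/d\<rceil> + 1"
  have Npos: "N > 0" by (simp add: N_def)
  have "real N > 2/d" unfolding N_def by linarith
  then have Nd: "1 / real N < d/2" using d(1) Npos by (simp add: field_simps)
  define P where "P = qz N ` {0..1} \<times> qz N ` {0..1}"
  have Pf: "finite P" unfolding P_def using qz_finite by simp
  have qsub: "qz N ` {0..1} \<subseteq> {0..1}" using qz_props(1)[OF Npos] by blast
  have PI: "P \<subseteq> {0..1} \<times> {0..1}" unfolding P_def using qsub by blast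
  obtain n ch where n: "n \<ge> 1" "\<forall>p. ch p \<in> {0..1}"
     "\<forall>(a,b)\<in>P. \<bar>ch (a,b) - a\<bar> < d/2 \<and> \<bar>comp_seq f n (ch (a,b)) - b\<bar> < d/2"
    using hit[OF Pf PI, of "d/2"] d(1) by auto
  obtain k where k: "n = Suc k" using n(1) by (cases n) auto
  define Phi where "Phi = (\<lambda>(kk::int, l::int). ch (real_of_int kk / real N, real_of_int l / real N))"
  have PhiI: "\<forall>i. Phi i \<in> {0..1}" using n(2) by (auto simp: Phi_def)
  define phi where "phi = (\<lambda>z::real \<times> real. Phi (\<lfloor>real N * fst z\<rfloor>, \<lfloor>real N * snd z\<rfloor>))"
  have phi_eq: "phi z = ch (qz N (fst z), qz N (snd z))" for z by (simp add: phi_def Phi_def qz_def)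
  have close: "\<bar>phi z - fst z\<bar> < d \<and> \<bar>comp_seq f n (phi z) - snd z\<bar> < d \<and> phi z \<in> {0..1} \<and> comp_seq f n (phi z) \<in> {0..1}"
    if z: "z \<in> {0..1} \<times> {0..1}" for z
  proof -
    have mem: "(qz N (fst z), qz N (snd z)) \<in> P" using z by (auto simp: P_def)
    have 1: "\<bar>qz N (fst z) - fst z\<bar> < d/2" "\<bar>qz N (snd z) - snd z\<bar> < d/2"
      using qz_props(2)[OF Npos, of "fst z"] qz_props(2)[OF Npos, of "snd z"] z Nd by auto
    have 2: "\<bar>phi z - qz N (fst z)\<bar> < d/2" "\<bar>comp_seq f n (phi z) - qz N (snd z)\<bar> < d/2"
      using n(3) mem unfolding phi_eq by auto
    have 3: "phi z \<in> {0..1}" using n(2) by (simp add: phi_eq)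
    have "\<bar>phi z - fst z\<bar> < d" using 1(1) 2(1) by (simp add: abs_if split: if_splits)
    moreover have "\<bar>comp_seq f n (phi z) - snd z\<bar> < d" using 1(2) 2(2) by (simp add: abs_if split: if_splits)
    ultimately show ?thesis using 3 F_self[OF 3] by auto
  qed
  have "\<forall>i<3. comp_seq (\<lambda>n. pushforward_I (f n)) n ` U i \<inter> V i \<noteq> {}"
  proof (intro allI impI)
    fix i :: nat assume i: "i < 3"
    have mP: "\<mu> i \<in> PM" "\<nu> i \<in> PM" using pU pV i by auto
    define M where "M = \<mu> i \<Otimes>\<^sub>M \<nu> i"
    have probM: "prob_space M" unfolding M_def using prob_space_pair PM_D(1) mP by blast
    have spM: "space M = {0..1} \<times> {0..1}" unfolding M_def using PM_D(3) mP by (simp add: space_pair_measure)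
    have phim: "phi \<in> measurable M borel_I"
      unfolding M_def phi_def using phi_meas[OF PM_D(2)[OF mP(1)] PM_D(2)[OF mP(2)] PhiI] .
    have fstm: "fst \<in> measurable M borel_I"
      unfolding M_def using measurable_fst[of "\<mu> i" "\<nu> i"] PM_meas[OF mP(1)]
        measurable_cong_sets[OF refl PM_D(2)[OF mP(1)]] by blast
    have sndm: "snd \<in> measurable M borel_I"
      unfolding M_def using measurable_snd[of "\<mu> i" "\<nu> i"]
        measurable_cong_sets[OF refl PM_D(2)[OF mP(2)]] by blast
    define \<rho> where "\<rho> = distr M borel_I phi"
    have rhoPM: "\<rho> \<in> PM" unfolding \<rho>_def prob_measures_I_def
      using prob_space.prob_space_distr[OF probM phim] by simp
    have "\<rho> \<in> NB (\<mu> i) (fst (pU i)) (snd (pU i))"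
    proof (rule NB_mem[OF rhoPM], rule ballI)
      fix g assume g: "g \<in> fst (pU i)"
      then have gc: "continuous_on {0..1} g" and gG: "g \<in> GG" using pU i by (auto simp: GG_def)
      have e1: "(\<integral>x. g x \<partial>\<rho>) = (\<integral>z. g (phi z) \<partial>M)"
        unfolding \<rho>_def by (rule integral_distr[OF phim cont_meas[OF gc]])
      have gm: "g \<in> borel_measurable (\<mu> i)" unfolding PM_meas[OF mP(1)] by (rule cont_meas[OF gc])
      have "distr M (\<mu> i) fst = \<mu> i"
        unfolding M_def using prob_space.distr_pair_fst[OF PM_D(1)[OF mP(2)]] by blast
      then have e2: "(\<integral>x. g x \<partial>\<mu> i) = (\<integral>z. g (fst z) \<partial>M)"
        using integral_distr[OF measurable_fst[of "\<mu> i" "\<nu> i"] gm]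
        unfolding M_def by simp
      have "\<forall>z\<in>space M. \<bar>g (phi z) - g (fst z)\<bar> \<le> e/2"
      proof
        fix z assume "z \<in> space M"
        then have z: "z \<in> {0..1} \<times> {0..1}" using spM by simp
        then have "fst z \<in> {0..1}" by auto
        then show "\<bar>g (phi z) - g (fst z)\<bar> \<le> e/2" using d(2) gG close[OF z] by fastforce
      qed
      from int_close[OF probM phim fstm gc this]
      have "\<bar>(\<integral>x. g x \<partial>\<rho>) - (\<integral>x. g x \<partial>\<mu> i)\<bar> \<le> e/2" using e1 e2 by simp
      then show "\<bar>(\<integral>x. g x \<partial>\<rho>) - (\<integral>x. g x \<partial>\<mu> i)\<bar> < snd (pU i)" using eU i epos by fastforce
    qed
    then have rhoU: "\<rho> \<in> U i" using pU i by blast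
    have Fphim: "comp_seq f n \<circ> phi \<in> measurable M borel_I" by (rule measurable_comp[OF phim F_meas])
    have "comp_seq (\<lambda>n. pushforward_I (f n)) n \<rho> = distr \<rho> borel_I (comp_seq f n)"
      using push_iter[OF rhoPM, of k] k by simp
    also have "\<dots> = distr M borel_I (comp_seq f n \<circ> phi)"
      unfolding \<rho>_def by (rule distr_distr[OF F_meas phim])
    finally have rho_eq: "comp_seq (\<lambda>n. pushforward_I (f n)) n \<rho> = distr M borel_I (comp_seq f n \<circ> phi)" .
    have rho2PM: "distr M borel_I (comp_seq f n \<circ> phi) \<in> PM" unfolding prob_measures_I_def
      using prob_space.prob_space_distr[OF probM Fphim] by simp
    have "distr M borel_I (comp_seq f n \<circ> phi) \<in> NB (\<nu> i) (fst (pV i)) (snd (pV i))"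
    proof (rule NB_mem[OF rho2PM], rule ballI)
      fix g assume g: "g \<in> fst (pV i)"
      then have gc: "continuous_on {0..1} g" and gG: "g \<in> GG" using pV i by (auto simp: GG_def)
      have e1: "(\<integral>x. g x \<partial>distr M borel_I (comp_seq f n \<circ> phi)) = (\<integral>z. g ((comp_seq f n \<circ> phi) z) \<partial>M)"
        by (rule integral_distr[OF Fphim cont_meas[OF gc]])
      have gm: "g \<in> borel_measurable (\<nu> i)" unfolding PM_meas[OF mP(2)] by (rule cont_meas[OF gc])
      have "distr M (\<nu> i) snd = \<nu> i"
        unfolding M_def by (rule distr_pair_snd'[OF PM_D(1)[OF mP(1)] PM_D(1)[OF mP(2)]])
      then have e2: "(\<integral>x. g x \<partial>\<nu> i) = (\<integral>z. g (snd z) \<partial>M)"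
        using integral_distr[OF measurable_snd[of "\<mu> i" "\<nu> i"] gm]
        unfolding M_def by simp
      have "\<forall>z\<in>space M. \<bar>g ((comp_seq f n \<circ> phi) z) - g (snd z)\<bar> \<le> e/2"
      proof
        fix z assume "z \<in> space M"
        then have z: "z \<in> {0..1} \<times> {0..1}" using spM by simp
        then have "snd z \<in> {0..1}" by auto
        then show "\<bar>g ((comp_seq f n \<circ> phi) z) - g (snd z)\<bar> \<le> e/2" using d(2) gG close[OF z] by fastforce
      qed
      from int_close[OF probM Fphim sndm gc this]
      have "\<bar>(\<integral>x. g x \<partial>distr M borel_I (comp_seq f n \<circ> phi)) - (\<integral>x. g x \<partial>\<nu> i)\<bar> \<le> e/2"
        using e1 e2 by simp
      then show "\<bar>(\<integral>x. g x \<partial>distr M borel_I (comp_seq f n \<circ> phi)) - (\<integral>x. g x \<partial>\<nu> i)\<bar> < snd (pV i)"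
        using eV i epos by fastforce
    qed
    then have "comp_seq (\<lambda>n. pushforward_I (f n)) n \<rho> \<in> V i" using pV i rho_eq by auto
    then show "comp_seq (\<lambda>n. pushforward_I (f n)) n ` U i \<inter> V i \<noteq> {}" using rhoU by blast
  qed
  then show "\<exists>n\<ge>1. \<forall>i<3. comp_seq (\<lambda>n. pushforward_I (f n)) n ` U i \<inter> V i \<noteq> {}" using n(1) by blast
qed

end

theorem mainTheorem6:
  fixes f :: "nat \<Rightarrow> real \<Rightarrow> real"
  assumes cont: "\<And>n. n \<ge> 1 \<Longrightarrow> continuous_on {0..1} (f n)"
    and self: "\<And>n. n \<ge> 1 \<Longrightarrow> f n ` {0..1} \<subseteq> {0..1}"
  shows "weakly_mixing_order 3 (subtopology euclideanreal {0..1}) f \<longleftrightarrow>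
         weakly_mixing_order 3 weak_star_topology_I (\<lambda>n. pushforward_I (f n))"
proof
  have S: "sys f" using cont self by (simp add: sys_def)
  assume "weakly_mixing_order 3 (subtopology euclideanreal {0..1}) f"
  then have "sys3 f" using S by (simp add: sys3_def sys3_axioms_def)
  then show "weakly_mixing_order 3 weak_star_topology_I (\<lambda>n. pushforward_I (f n))"
    by (rule sys3.fwd)
next
  have S: "sys f" using cont self by (simp add: sys_def)
  assume "weakly_mixing_order 3 weak_star_topology_I (\<lambda>n. pushforward_I (f n))"
  then show "weakly_mixing_order 3 (subtopology euclideanreal {0..1}) f"
    by (rule sys.back_dir[OF S])
qed

end
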